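(* Let $\Theta$ be a branch of a tableau of $\mathbf{TAB}_{\mathbf{IB}}$. Then $\Theta$ is infinite if and only if there is an infinite sequence of nominals $i_0\prec_\Theta i_1\prec_\Theta i_2\prec_\Theta\cdots$.
   Context: Hybrid language: fix disjoint countably infinite sets $\mathbf{Prop}$ (propositional variables) and $\mathbf{Nom}$ (nominals). Formulas: $\varphi ::= p \mid i \mid \neg\varphi \mid \varphi\land\varphi \mid \Diamond\varphi \mid @_i\varphi$ with $p\in\mathbf{Prop}$, $i\in\mathbf{Nom}$; $\Box\varphi$ abbreviates $\neg\Diamond\neg\varphi$. Tableau calculus $\mathbf{TAB}_{\mathbf{IB}}$. A tableau is a well-founded tree whose nodes are formulas of the form $@_i\varphi$; its root is a formula $@_i\varphi$ (the root formula) where $i$ does not occur in $\varphi$. A branch is a maximal path; $\varphi\in\Theta$ means $\varphi$ occurs on branch $\Theta$. Each branch is extended by applying the rules below to its formulas as often as possible, except that no further formula is added to a branch once either (i) every new formula generated by applying any rule already occurs on the branch, or (ii) the branch is closed, i.e. contains $@_i\varphi$ and $@_i\neg\varphi$ for some formula $\varphi$ and nominal $i$. An accessibility formula is a formula $@_i\Diamond j$ added by rule $[\Diamond]$ (with $j$ the new nominal). Rules (premises already on the branch; conclusions added to it): [$\neg\neg$] from $@_i\neg\neg\varphi$ add $@_i\varphi$; [$\land$] from $@_i(\varphi\land\psi)$ add $@_i\varphi$ and $@_i\psi$; [$\neg\land$] from $@_i\neg(\varphi\land\psi)$ split the branch into one extended by $@_i\neg\varphi$ and one extended by $@_i\neg\psi$;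 [$\Diamond$] from $@_i\Diamond\varphi$, which is not an accessibility formula, add $@_i\Diamond j$ and $@_j\varphi$ where $j$ is a nominal not occurring on the branch; this rule is applied at most once per formula, and only if $i$ is a quasi-urfather on the branch (defined below); [$\neg\Diamond$] from $@_i\neg\Diamond\varphi$ and $@_i\Diamond j$ add $@_j\neg\varphi$; [$\Box_{sym}$] from $@_i\Box\varphi$ and $@_j\Diamond i$ add $@_j\varphi$; [$@$] from $@_i@_j\varphi$ add $@_j\varphi$; [$\neg@$] from $@_i\neg@_j\varphi$ add $@_j\neg\varphi$; [$Id$] from $@_i\varphi$, which is not an accessibility formula, and $@_i j$ add $@_j\varphi$; [$Ref$] for any nominal $i$ occurring on the branch add $@_i i$; ($\mathcal{I}$) for any nominal $i$ occurring on the branch add $@_i\neg\Diamond i$. Auxiliary notions for a branch $\Theta$. $@_i\varphi$ is a quasi-subformula of $@_j\psi$ if $\varphi$ is a subformula of $\psi$, or $\varphi=\neg\chi$ with $\chi$ a subformula of $\psi$. For a nominal $i$ occurring in $\Theta$, $T^\Theta(i)=\{\varphi \mid @_i\varphi\in\Theta$ and $@_i\varphi$ is a quasi-subformula of the root formula$\}$. Nominals $i,j$ are twins if $T^\Theta(i)=T^\Theta(j)$. $i\prec_\Theta j$ if $j$ was introduced by applying $[\Diamond]$ to a formula $@_i\Diamond\varphi$ (equivalently, the accessibility formula $@_i\Diamond j$ is in $\Theta$); $\prec_\Theta^*$ is its reflexive transitive closure. A nominal $i$ is a quasi-urfather on $\Theta$ if there are no twins $j\neq k$ with $j\prec_\Theta^*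 i$ and $k\prec_\Theta^* i$. *)

theory Defs
  imports Main
begin

datatype fm = Pro nat | Nom nat | Neg fm | Con fm fm | Dia fm | At nat fm

definition Box :: "fm \<Rightarrow> fm" where
  "Box \<phi> = Neg (Dia (Neg \<phi>))"

primrec noms :: "fm \<Rightarrow> nat set" where
  "noms (Pro p) = {}"
| "noms (Nom i) = {i}"
| "noms (Neg \<phi>) = noms \<phi>"
| "noms (Con \<phi> \<psi>) = noms \<phi> \<union> noms \<psi>"
| "noms (Dia \<phi>) = noms \<phi>"
| "noms (At i \<phi>) = insert i (noms \<phi>)"

primrec subfs :: "fm \<Rightarrow> fm set" where
  "subfs (Pro p) = {Pro p}"
| "subfs (Nom i) = {Nom i}"
| "subfs (Neg \<phi>) = insert (Neg \<phi>) (subfs \<phi>)"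
| "subfs (Con \<phi> \<psi>) = insert (Con \<phi> \<psi>) (subfs \<phi> \<union> subfs \<psi>)"
| "subfs (Dia \<phi>) = insert (Dia \<phi>) (subfs \<phi>)"
| "subfs (At i \<phi>) = insert (At i \<phi>) (subfs \<phi>)"

text \<open>A tableau node formula @_i phi is represented as the pair (i, phi).\<close>
type_synonym lfm = "nat \<times> fm"

definition lnoms :: "lfm \<Rightarrow> nat set" where
  "lnoms x = insert (fst x) (noms (snd x))"

definition nomsof :: "lfm set \<Rightarrow> nat set" where
  "nomsof F = (\<Union>x\<in>F. lnoms x)"

definition quasi_sub :: "lfm \<Rightarrow> lfm \<Rightarrow> bool" where
  "quasi_sub x y \<longleftrightarrow> snd x \<in> subfs (snd y) \<or> (\<exists>\<chi>. snd x = Neg \<chi> \<and> \<chi> \<in> subfs (snd y))"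

definition closed :: "lfm set \<Rightarrow> bool" where
  "closed F \<longleftrightarrow> (\<exists>i \<phi>. (i, \<phi>) \<in> F \<and> (i, Neg \<phi>) \<in> F)"

text \<open>Ord cs: application of a rule other than [Dia]; cs are the formulas added
  (for the splitting rule [neg-and], the conclusion chosen on this branch).
  Dstep i psi j: application of [Dia] to the premise @_i Dia psi, introducing the new
  nominal j; it adds the accessibility formula @_i Dia j and the formula @_j psi.\<close>

datatype step = Ord "lfm list" | Dstep nat fm nat

fun step_forms :: "step \<Rightarrow> lfm list" where
  "step_forms (Ord cs) = cs"
| "step_forms (Dstep i \<psi> j) = [(i, Dia (Nom j)), (j, \<psi>)]"

fun step_nonacc :: "step \<Rightarrow> lfm set" where
  "step_nonacc (Ord cs) = set cs"
| "step_nonacc (Dstep i \<psi> j) = {(j, \<psi>)}"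

definition forms :: "lfm \<Rightarrow> step list \<Rightarrow> lfm set" where
  "forms r ss = insert r (\<Union>s\<in>set ss. set (step_forms s))"

text \<open>Formulas having an occurrence on the branch that is not an accessibility formula.\<close>
definition nonacc :: "lfm \<Rightarrow> step list \<Rightarrow> lfm set" where
  "nonacc r ss = insert r (\<Union>s\<in>set ss. step_nonacc s)"

definition accrel :: "step list \<Rightarrow> (nat \<times> nat) set" where
  "accrel ss = {(i, j). \<exists>\<psi>. Dstep i \<psi> j \<in> set ss}"

definition Tset :: "lfm \<Rightarrow> step list \<Rightarrow> nat \<Rightarrow> fm set" where
  "Tset r ss i = {\<phi>. (i, \<phi>) \<in> forms r ss \<and> quasi_sub (i, \<phi>) r}"

definition twins :: "lfm \<Rightarrow> step list \<Rightarrow> nat \<Rightarrow> nat \<Rightarrow> bool" where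
  "twins r ss i j \<longleftrightarrow> i \<in> nomsof (forms r ss) \<and> j \<in> nomsof (forms r ss) \<and>
     Tset r ss i = Tset r ss j"

definition quasi_urfather :: "lfm \<Rightarrow> step list \<Rightarrow> nat \<Rightarrow> bool" where
  "quasi_urfather r ss i \<longleftrightarrow>
     \<not> (\<exists>j k. j \<noteq> k \<and> twins r ss j k \<and> (j, i) \<in> (accrel ss)\<^sup>* \<and> (k, i) \<in> (accrel ss)\<^sup>*)"

text \<open>Conclusions of the non-splitting rules other than [Dia], given the formula set F,
  the set NA of formulas with a non-accessibility occurrence and the nominals N.\<close>
definition simple_concl :: "lfm set \<Rightarrow> lfm set \<Rightarrow> nat set \<Rightarrow> lfm list \<Rightarrow> bool" where
  "simple_concl F NA N cs \<longleftrightarrow>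
     (\<exists>i \<phi>. (i, Neg (Neg \<phi>)) \<in> F \<and> cs = [(i, \<phi>)]) \<or>
     (\<exists>i \<phi> \<psi>. (i, Con \<phi> \<psi>) \<in> F \<and> cs = [(i, \<phi>), (i, \<psi>)]) \<or>
     (\<exists>i \<phi> j. (i, Neg (Dia \<phi>)) \<in> F \<and> (i, Dia (Nom j)) \<in> F \<and> cs = [(j, Neg \<phi>)]) \<or>
     (\<exists>i \<phi> j. (i, Box \<phi>) \<in> F \<and> (j, Dia (Nom i)) \<in> F \<and> cs = [(j, \<phi>)]) \<or>
     (\<exists>i j \<phi>. (i, At j \<phi>) \<in> F \<and> cs = [(j, \<phi>)]) \<or>
     (\<exists>i j \<phi>. (i, Neg (At j \<phi>)) \<in> F \<and> cs = [(j, Neg \<phi>)]) \<or>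
     (\<exists>i j \<phi>. (i, \<phi>) \<in> NA \<and> (i, Nom j) \<in> F \<and> cs = [(j, \<phi>)]) \<or>
     (\<exists>i. i \<in> N \<and> cs = [(i, Nom i)]) \<or>
     (\<exists>i. i \<in> N \<and> cs = [(i, Neg (Dia (Nom i)))])"

definition split_concl :: "lfm set \<Rightarrow> lfm list \<Rightarrow> bool" where
  "split_concl F cs \<longleftrightarrow>
     (\<exists>i \<phi> \<psi>. (i, Neg (Con \<phi> \<psi>)) \<in> F \<and> (cs = [(i, Neg \<phi>)] \<or> cs = [(i, Neg \<psi>)]))"

definition dia_ok :: "lfm \<Rightarrow> step list \<Rightarrow> nat \<Rightarrow> fm \<Rightarrow> nat \<Rightarrow> bool" where
  "dia_ok r ss i \<psi> j \<longleftrightarrow>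
     (i, Dia \<psi>) \<in> nonacc r ss \<and> j \<notin> nomsof (forms r ss) \<and>
     quasi_urfather r ss i \<and> \<not> (\<exists>j'. Dstep i \<psi> j' \<in> set ss)"

fun step_ok :: "lfm \<Rightarrow> step list \<Rightarrow> step \<Rightarrow> bool" where
  "step_ok r ss (Ord cs) \<longleftrightarrow> \<not> closed (forms r ss) \<and>
     (simple_concl (forms r ss) (nonacc r ss) (nomsof (forms r ss)) cs \<or> split_concl (forms r ss) cs) \<and>
     \<not> set cs \<subseteq> forms r ss"
| "step_ok r ss (Dstep i \<psi> j) \<longleftrightarrow> \<not> closed (forms r ss) \<and> dia_ok r ss i \<psi> j"

definition saturated :: "lfm \<Rightarrow> step list \<Rightarrow> bool" where
  "saturated r ss \<longleftrightarrow> closed (forms r ss) \<or>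
     ((\<forall>cs. simple_concl (forms r ss) (nonacc r ss) (nomsof (forms r ss)) cs \<longrightarrow> set cs \<subseteq> forms r ss) \<and>
      (\<forall>i \<phi> \<psi>. (i, Neg (Con \<phi> \<psi>)) \<in> forms r ss \<longrightarrow>
          (i, Neg \<phi>) \<in> forms r ss \<or> (i, Neg \<psi>) \<in> forms r ss) \<and>
      (\<forall>i \<psi> j. \<not> dia_ok r ss i \<psi> j))"

text \<open>A branch is given by its root formula r and the sequence s of rule applications
  along it: s n = Some st for the n-th step; s n = None once the branch has ended.\<close>

definition prefix :: "(nat \<Rightarrow> step option) \<Rightarrow> nat \<Rightarrow> step list" where
  "prefix s n = map (\<lambda>k. the (s k)) [0..<n]"

definition root_ok :: "lfm \<Rightarrow> bool" where
  "root_ok r \<longleftrightarrow> fst r \<notin> noms (snd r)"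

definition is_branch :: "lfm \<Rightarrow> (nat \<Rightarrow> step option) \<Rightarrow> bool" where
  "is_branch r s \<longleftrightarrow> root_ok r \<and>
     (\<forall>n. s n = None \<longrightarrow> s (Suc n) = None) \<and>
     (\<forall>n st. s n = Some st \<longrightarrow> step_ok r (prefix s n) st) \<and>
     (\<forall>n. s n = None \<and> (\<forall>m<n. s m \<noteq> None) \<longrightarrow> saturated r (prefix s n))"

text \<open>Nodes of the branch: the root (position None) and the formulas added by each step.\<close>
definition branch_nodes :: "(nat \<Rightarrow> step option) \<Rightarrow> (nat \<times> nat) option set" where
  "branch_nodes s = insert None
     {Some (n, k) | n k st. s n = Some st \<and> k < length (step_forms st)}"

definition prec :: "(nat \<Rightarrow> step option) \<Rightarrow> nat \<Rightarrow> nat \<Rightarrow> bool" where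
  "prec s i j \<longleftrightarrow> (\<exists>n \<psi>. s n = Some (Dstep i \<psi> j))"

end

theory Submission
  imports Defs
begin

lemma subfs_self: "\<phi> \<in> subfs \<phi>"
  by (cases \<phi>) auto

lemma subfs_trans: "\<psi> \<in> subfs \<phi> \<Longrightarrow> \<chi> \<in> subfs \<psi> \<Longrightarrow> \<chi> \<in> subfs \<phi>"
  by (induction \<phi>) auto

lemma finite_subfs: "finite (subfs \<phi>)"
  by (induction \<phi>) auto

lemma finite_noms: "finite (noms \<phi>)"
  by (induction \<phi>) auto

lemma subfs_Neg: "Neg \<phi> \<in> subfs \<chi> \<Longrightarrow> \<phi> \<in> subfs \<chi>"
  using subfs_trans[of "Neg \<phi>" \<chi> \<phi>] subfs_self by auto
lemma subfs_Dia: "Dia \<phi> \<in> subfs \<chi> \<Longrightarrow> \<phi> \<in> subfs \<chi>"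
  using subfs_trans[of "Dia \<phi>" \<chi> \<phi>] subfs_self by auto
lemma subfs_At: "At j \<phi> \<in> subfs \<chi> \<Longrightarrow> \<phi> \<in> subfs \<chi>"
  using subfs_trans[of "At j \<phi>" \<chi> \<phi>] subfs_self by auto
lemma subfs_Con: "Con \<phi> \<psi> \<in> subfs \<chi> \<Longrightarrow> \<phi> \<in> subfs \<chi> \<and> \<psi> \<in> subfs \<chi>"
  using subfs_trans[of "Con \<phi> \<psi>" \<chi> \<phi>] subfs_trans[of "Con \<phi> \<psi>" \<chi> \<psi>] subfs_self by auto

lemma prefix_Suc: "prefix s (Suc n) = prefix s n @ [the (s n)]"
  by (simp add: prefix_def)

lemma forms_append: "forms r (ss @ [st]) = forms r ss \<union> set (step_forms st)"
  by (auto simp: forms_def)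
lemma nonacc_append: "nonacc r (ss @ [st]) = nonacc r ss \<union> step_nonacc st"
  by (auto simp: nonacc_def)

lemma step_nonacc_sub: "step_nonacc st \<subseteq> set (step_forms st)"
  by (cases st) auto

lemma nonacc_sub_forms: "nonacc r ss \<subseteq> forms r ss"
  using step_nonacc_sub by (fastforce simp: nonacc_def forms_def)

lemma step_forms_cases: "x \<in> set (step_forms st) \<Longrightarrow> x \<in> step_nonacc st \<or> (\<exists>j. snd x = Dia (Nom j))"
  by (cases st) auto

lemma forms_cases: "x \<in> forms r ss \<Longrightarrow> x \<in> nonacc r ss \<or> (\<exists>j. snd x = Dia (Nom j))"
  unfolding forms_def nonacc_def using step_forms_cases by blast

lemma lnoms_sub: "x \<in> F \<Longrightarrow> lnoms x \<subseteq> nomsof F"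
  by (auto simp: nomsof_def)

definition goodNA :: "fm set \<Rightarrow> fm \<Rightarrow> bool" where
  "goodNA S \<phi> \<longleftrightarrow> \<phi> \<in> S \<or> (\<exists>\<chi>\<in>S. \<phi> = Neg \<chi>) \<or>
     (\<exists>j. \<phi> = Nom j \<or> \<phi> = Neg (Nom j) \<or> \<phi> = Neg (Dia (Nom j)))"

definition goodF :: "fm set \<Rightarrow> fm \<Rightarrow> bool" where
  "goodF S \<phi> \<longleftrightarrow> goodNA S \<phi> \<or> (\<exists>j. \<phi> = Dia (Nom j))"

lemma inv_step:
  assumes na: "\<forall>x\<in>nonacc r ss. goodNA (subfs (snd r)) (snd x)"
    and ok: "step_ok r ss st"
  shows "\<forall>x\<in>step_nonacc st. goodNA (subfs (snd r)) (snd x)"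
proof -
  let ?S = "subfs (snd r)"
  have F: "\<And>x. x \<in> forms r ss \<Longrightarrow> goodF ?S (snd x)"
    using na forms_cases unfolding goodF_def by blast
  show ?thesis
  proof (cases st)
    case (Ord cs)
    with ok have c: "simple_concl (forms r ss) (nonacc r ss) (nomsof (forms r ss)) cs \<or> split_concl (forms r ss) cs"
      by simp
    then show ?thesis using Ord
      unfolding simple_concl_def split_concl_def
      apply (elim disjE exE conjE)
      using F na
      by (fastforce simp: goodF_def goodNA_def Box_def subfs_self dest: subfs_Neg subfs_Dia subfs_At subfs_Con)+
  next
    case (Dstep i \<psi> j)
    with ok have "(i, Dia \<psi>) \<in> nonacc r ss" by (simp add: dia_ok_def)
    with na have "goodNA ?S (Dia \<psi>)" by fastforce
    then have "\<psi> \<in> ?S" by (auto simp: goodNA_def dest: subfs_Dia)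
    then show ?thesis using Dstep by (simp add: goodNA_def)
  qed
qed


lemma ok_n: "is_branch r s \<Longrightarrow> s n = Some st \<Longrightarrow> step_ok r (prefix s n) st"
  by (simp add: is_branch_def)

lemma inv_branch:
  assumes b: "is_branch r s" and some: "\<forall>m<n. s m \<noteq> None"
  shows "\<forall>x\<in>nonacc r (prefix s n). goodNA (subfs (snd r)) (snd x)"
  using some
proof (induction n)
  case 0
  then show ?case by (simp add: prefix_def nonacc_def goodNA_def subfs_self)
next
  case (Suc n)
  then obtain st where st: "s n = Some st" by auto
  from Suc have IH: "\<forall>x\<in>nonacc r (prefix s n). goodNA (subfs (snd r)) (snd x)" by auto
  have "\<forall>x\<in>step_nonacc st. goodNA (subfs (snd r)) (snd x)"
    using inv_step[OF IH ok_n[OF b st]] .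
  moreover have "nonacc r (prefix s (Suc n)) = nonacc r (prefix s n) \<union> step_nonacc st"
    using st by (simp add: prefix_Suc nonacc_append)
  ultimately show ?case using IH by blast
qed

lemma in_nomsof: "x \<in> F \<Longrightarrow> a \<in> lnoms x \<Longrightarrow> a \<in> nomsof F"
  by (auto simp: nomsof_def)

lemma nomsof_insert: "nomsof (insert x A) = lnoms x \<union> nomsof A" "nomsof {} = {}"
  by (auto simp: nomsof_def)

lemma ord_noms:
  assumes ok: "step_ok r ss (Ord cs)"
  shows "nomsof (set cs) \<subseteq> nomsof (forms r ss)"
proof -
  have c: "simple_concl (forms r ss) (nonacc r ss) (nomsof (forms r ss)) cs \<or> split_concl (forms r ss) cs"
    using ok by simp
  have na: "\<And>x. x \<in> nonacc r ss \<Longrightarrow> x \<in> forms r ss" using nonacc_sub_forms by blast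
  have nn: "nomsof (nonacc r ss) \<subseteq> nomsof (forms r ss)" using nonacc_sub_forms[of r ss] unfolding nomsof_def by blast
  show ?thesis
    using c unfolding simple_concl_def split_concl_def
    apply (elim disjE exE conjE)
    by (auto simp: nomsof_insert lnoms_def Box_def dest!: na lnoms_sub dest: subsetD[OF nn])
qed

lemma nomsof_union: "nomsof (A \<union> B) = nomsof A \<union> nomsof B"
  by (auto simp: nomsof_def)

lemma reach:
  assumes b: "is_branch r s" and some: "\<forall>m<n. s m \<noteq> None"
  shows "\<forall>j\<in>nomsof (forms r (prefix s n)). \<exists>i0\<in>lnoms r. (i0, j) \<in> {(i,j). prec s i j}\<^sup>*"
  using some
proof (induction n)
  case 0
  then show ?case by (auto simp: prefix_def forms_def nomsof_def)
next
  case (Suc n)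
  then obtain st where st: "s n = Some st" by auto
  from Suc have IH: "\<forall>j\<in>nomsof (forms r (prefix s n)). \<exists>i0\<in>lnoms r. (i0, j) \<in> {(i,j). prec s i j}\<^sup>*" by auto
  have ok: "step_ok r (prefix s n) st" using ok_n[OF b st] .
  show ?case
  proof (cases st)
    case (Ord cs)
    then show ?thesis using IH ord_noms[of r "prefix s n" cs] ok st
      by (auto simp: prefix_Suc forms_append nomsof_union)
  next
    case (Dstep i \<psi> j)
    have "(i, Dia \<psi>) \<in> nonacc r (prefix s n)" using ok Dstep by (auto simp: dia_ok_def)
    then have "(i, Dia \<psi>) \<in> forms r (prefix s n)" using nonacc_sub_forms[of r "prefix s n"] by blast
    then have ii: "lnoms (i, Dia \<psi>) \<subseteq> nomsof (forms r (prefix s n))" by (rule lnoms_sub)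
    then obtain i0 where i0: "i0 \<in> lnoms r" "(i0, i) \<in> {(i,j). prec s i j}\<^sup>*" using IH by (auto simp: lnoms_def)
    have "prec s i j" using st Dstep by (auto simp: prec_def)
    with i0 have "(i0, j) \<in> {(i,j). prec s i j}\<^sup>*" by (auto intro: rtrancl_into_rtrancl)
    have eq: "nomsof (forms r (prefix s (Suc n))) = nomsof (forms r (prefix s n)) \<union> ({i,j} \<union> noms \<psi>)"
      using st Dstep by (auto simp: prefix_Suc forms_append nomsof_union nomsof_insert lnoms_def)
    show ?thesis
    proof
      fix k assume "k \<in> nomsof (forms r (prefix s (Suc n)))"
      then have "k \<in> nomsof (forms r (prefix s n)) \<or> k = j"
        using eq ii by (auto simp: lnoms_def)
      then show "\<exists>i0\<in>lnoms r. (i0, k) \<in> {(i,j). prec s i j}\<^sup>*"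
        using IH i0 \<open>(i0, j) \<in> _\<close> by blast
    qed
  qed
qed

lemma dstep_unique_aux:
  assumes b: "is_branch r s" and n: "s n = Some (Dstep i \<psi> j)" and m: "s m = Some (Dstep i \<psi> j')"
    and lt: "n < m"
  shows False
proof -
  have "Dstep i \<psi> j \<in> set (prefix s m)" using n lt by (force simp: prefix_def)
  moreover have "dia_ok r (prefix s m) i \<psi> j'" using ok_n[OF b m] by simp
  ultimately show False by (auto simp: dia_ok_def)
qed

lemma dstep_unique:
  assumes b: "is_branch r s" and n: "s n = Some (Dstep i \<psi> j)" and m: "s m = Some (Dstep i \<psi> j')"
  shows "j = j'"
proof -
  have "n = m" using dstep_unique_aux[OF b n m] dstep_unique_aux[OF b m n] by (cases "n < m"; cases "m < n") auto
  then show ?thesis using n m by simp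
qed

lemma children_finite:
  assumes b: "is_branch r s" and some: "\<forall>n. s n \<noteq> None"
  shows "finite {j. prec s i j}"
proof -
  let ?f = "\<lambda>\<psi>. SOME j. \<exists>n. s n = Some (Dstep i \<psi> j)"
  have "{j. prec s i j} \<subseteq> ?f ` subfs (snd r)"
  proof
    fix j assume "j \<in> {j. prec s i j}"
    then obtain n \<psi> where n: "s n = Some (Dstep i \<psi> j)" by (auto simp: prec_def)
    have ok: "step_ok r (prefix s n) (Dstep i \<psi> j)" using ok_n[OF b n] .
    then have "(i, Dia \<psi>) \<in> nonacc r (prefix s n)" by (simp add: dia_ok_def)
    moreover have "\<forall>x\<in>nonacc r (prefix s n). goodNA (subfs (snd r)) (snd x)"
      using inv_branch[OF b] some by auto
    ultimately have "goodNA (subfs (snd r)) (Dia \<psi>)" by fastforce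
    then have ps: "\<psi> \<in> subfs (snd r)" by (auto simp: goodNA_def dest: subfs_Dia)
    have "\<exists>n. s n = Some (Dstep i \<psi> (?f \<psi>))" using n by (rule someI_ex[OF exI[of _ j], OF exI[of _ n]])
    then obtain m where "s m = Some (Dstep i \<psi> (?f \<psi>))" by blast
    then have "j = ?f \<psi>" using dstep_unique[OF b n] by blast
    then show "j \<in> ?f ` subfs (snd r)" using ps by blast
  qed
  then show ?thesis using finite_subfs finite_surj by blast
qed


lemma forms_mono: "set ss \<subseteq> set ss' \<Longrightarrow> forms r ss \<subseteq> forms r ss'"
  by (auto simp: forms_def)

lemma nomsof_mono: "A \<subseteq> B \<Longrightarrow> nomsof A \<subseteq> nomsof B"
  by (auto simp: nomsof_def)

lemma prefix_mono: "m \<le> n \<Longrightarrow> set (prefix s m) \<subseteq> set (prefix s n)"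
  by (auto simp: prefix_def)

lemma chain_order:
  assumes b: "is_branch r s" and n: "s n = Some (Dstep i \<psi> j)" and m: "s m = Some (Dstep j \<psi>' k)"
  shows "n < m"
proof (rule ccontr)
  assume "\<not> n < m"
  then have le: "m \<le> n" by simp
  have "j \<notin> nomsof (forms r (prefix s n))" using ok_n[OF b n] by (simp add: dia_ok_def)
  moreover have "(j, Dia \<psi>') \<in> nonacc r (prefix s m)" using ok_n[OF b m] by (simp add: dia_ok_def)
  then have "(j, Dia \<psi>') \<in> forms r (prefix s m)" using nonacc_sub_forms by blast
  then have "j \<in> nomsof (forms r (prefix s m))" by (rule in_nomsof) (simp add: lnoms_def)
  then have "j \<in> nomsof (forms r (prefix s n))"
    using nomsof_mono[OF forms_mono[OF prefix_mono[OF le]]] by blast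
  ultimately show False by blast
qed

lemma grow:
  assumes b: "is_branch r s" and st: "s n = Some st"
  shows "forms r (prefix s n) \<subset> forms r (prefix s (Suc n))"
proof -
  have eq: "forms r (prefix s (Suc n)) = forms r (prefix s n) \<union> set (step_forms st)"
    using st by (simp add: prefix_Suc forms_append)
  have ok: "step_ok r (prefix s n) st" using ok_n[OF b st] .
  have "\<not> set (step_forms st) \<subseteq> forms r (prefix s n)"
  proof (cases st)
    case (Ord cs)
    then show ?thesis using ok by simp
  next
    case (Dstep i \<psi> j)
    then have "j \<notin> nomsof (forms r (prefix s n))" using ok by (simp add: dia_ok_def)
    then have "(j, \<psi>) \<notin> forms r (prefix s n)" using in_nomsof[of "(j,\<psi>)" _ j] by (auto simp: lnoms_def)
    then show ?thesis using Dstep by simp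
  qed
  then show ?thesis using eq by blast
qed

theorem lemma4:
  fixes r :: lfm and s :: "nat \<Rightarrow> step option"
  assumes "is_branch r s"
  shows "infinite (branch_nodes s) \<longleftrightarrow> (\<exists>g :: nat \<Rightarrow> nat. \<forall>n. prec s (g n) (g (Suc n)))"
proof
  assume "\<exists>g :: nat \<Rightarrow> nat. \<forall>n. prec s (g n) (g (Suc n))"
  then obtain g :: "nat \<Rightarrow> nat" where g: "\<forall>n. prec s (g n) (g (Suc n))" by blast
  then have "\<forall>k. \<exists>n \<psi>. s n = Some (Dstep (g k) \<psi> (g (Suc k)))" by (simp add: prec_def)
  then obtain N \<Psi> where N: "\<And>k. s (N k) = Some (Dstep (g k) (\<Psi> k) (g (Suc k)))" by metis
  have "\<And>k. N k < N (Suc k)" using chain_order[OF assms N N] .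
  then have "strict_mono N" by (simp add: strict_mono_Suc_iff)
  then have inj: "inj N" by (rule strict_mono_imp_inj_on)
  have sub: "range (\<lambda>k. Some (N k, 0)) \<subseteq> branch_nodes s"
    using N by (force simp: branch_nodes_def)
  have "inj (\<lambda>k. Some (N k, 0::nat))" using inj by (auto simp: inj_def)
  then have "infinite (range (\<lambda>k. Some (N k, 0::nat)))" using finite_imageD by blast
  then show "infinite (branch_nodes s)" using sub finite_subset by blast
next
  assume inf: "infinite (branch_nodes s)"
  have allS: "\<forall>n. s n \<noteq> None"
  proof (rule ccontr)
    assume "\<not> (\<forall>n. s n \<noteq> None)"
    then obtain N where N: "s N = None" by blast
    have none: "s m = None" if "N \<le> m" for m
      using that
    proof (induction m rule: dec_induct)
      case base then show ?case using N .
    next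
      case (step m) then show ?case using assms by (simp add: is_branch_def)
    qed
    have "branch_nodes s \<subseteq> insert None ((\<lambda>p. Some p) ` (SIGMA n:{..<N}. {..<length (step_forms (the (s n)))}))"
    proof
      fix x assume "x \<in> branch_nodes s"
      then show "x \<in> insert None ((\<lambda>p. Some p) ` (SIGMA n:{..<N}. {..<length (step_forms (the (s n)))}))"
      proof (cases "x = None")
        case False
        with \<open>x \<in> branch_nodes s\<close> obtain n k st where x: "x = Some (n, k)" "s n = Some st"
          "k < length (step_forms st)" unfolding branch_nodes_def by blast
        have "n < N" using none x(2) by (metis not_le option.distinct(1))
        then have "(n, k) \<in> (SIGMA n:{..<N}. {..<length (step_forms (the (s n)))})" using x by simp
        then show ?thesis using x(1) by blast
      qed simp
    qed
    moreover have "finite (insert None ((\<lambda>p. Some p) ` (SIGMA n:{..<N}. {..<length (step_forms (the (s n)))})))"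
      by auto
    ultimately show False using inf finite_subset by blast
  qed
  define F where "F n = forms r (prefix s n)" for n
  define NN where "NN = (\<Union>n. nomsof (F n))"
  have invF: "goodF (subfs (snd r)) (snd x)" if "x \<in> F n" for x n
  proof -
    have "\<forall>x\<in>nonacc r (prefix s n). goodNA (subfs (snd r)) (snd x)"
      using inv_branch[OF assms] allS by auto
    then show ?thesis using forms_cases[of x r "prefix s n"] that unfolding F_def goodF_def by blast
  qed
  have NNinf: "infinite NN"
  proof
    assume fin: "finite NN"
    define C where "C = subfs (snd r) \<union> Neg ` subfs (snd r) \<union> Nom ` NN \<union> (\<lambda>j. Neg (Nom j)) ` NN
       \<union> (\<lambda>j. Neg (Dia (Nom j))) ` NN \<union> (\<lambda>j. Dia (Nom j)) ` NN"
    have finB: "finite (NN \<times> C)" using fin finite_subfs by (simp add: C_def)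
    have sub: "F n \<subseteq> NN \<times> C" for n
    proof
      fix x assume x: "x \<in> F n"
      have ln: "lnoms x \<subseteq> NN" using lnoms_sub[OF x] by (auto simp: NN_def)
      have "goodF (subfs (snd r)) (snd x)" using invF[OF x] .
      then have "snd x \<in> C" using ln unfolding C_def goodF_def goodNA_def lnoms_def by auto
      moreover have "fst x \<in> NN" using ln by (auto simp: lnoms_def)
      ultimately show "x \<in> NN \<times> C" by (cases x) auto
    qed
    have "n \<le> card (F n)" for n
    proof (induction n)
      case 0 then show ?case by simp
    next
      case (Suc n)
      obtain st where st: "s n = Some st" using allS by auto
      have "F n \<subset> F (Suc n)" using grow[OF assms st] by (simp add: F_def)
      moreover have "finite (F (Suc n))" using sub finB finite_subset by blast
      ultimately have "card (F n) < card (F (Suc n))" by (rule psubset_card_mono[rotated])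
      then show ?case using Suc by simp
    qed
    moreover have "card (F n) \<le> card (NN \<times> C)" for n using sub finB by (rule card_mono[rotated])
    ultimately have "Suc (card (NN \<times> C)) \<le> card (NN \<times> C)" by (meson le_trans)
    then show False by simp
  qed
  define P where "P = {(i,j). prec s i j}"
  define D where "D i = {j. (i,j) \<in> P\<^sup>*}" for i
  have "NN \<subseteq> (\<Union>i0\<in>lnoms r. D i0)"
    using reach[OF assms] allS unfolding NN_def F_def D_def P_def by blast
  moreover have "finite (lnoms r)" by (simp add: lnoms_def finite_noms)
  ultimately obtain i0 where i0: "infinite (D i0)" using NNinf finite_subset by (metis finite_UN_I)
  have stp: "\<exists>j. prec s i j \<and> infinite (D j)" if inf_i: "infinite (D i)" for i
  proof (rule ccontr)
    assume no: "\<not> (\<exists>j. prec s i j \<and> infinite (D j))"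
    have "D i \<subseteq> insert i (\<Union>j\<in>{j. prec s i j}. D j)"
    proof
      fix k assume "k \<in> D i"
      then have "(i, k) \<in> P\<^sup>*" by (simp add: D_def)
      then show "k \<in> insert i (\<Union>j\<in>{j. prec s i j}. D j)"
        by (cases rule: converse_rtranclE) (auto simp: P_def D_def)
    qed
    moreover have "finite (insert i (\<Union>j\<in>{j. prec s i j}. D j))"
      using children_finite[OF assms allS] no by auto
    ultimately show False using inf_i finite_subset by blast
  qed
  define g where "g = rec_nat i0 (\<lambda>_ i. SOME j. prec s i j \<and> infinite (D j))"
  have g0: "g 0 = i0" by (simp add: g_def)
  have gS: "g (Suc n) = (SOME j. prec s (g n) j \<and> infinite (D j))" for n by (simp add: g_def)
  have ginf: "infinite (D (g n))" for n
  proof (induction n)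
    case 0 then show ?case using i0 g0 by simp
  next
    case (Suc n)
    then show ?case using someI_ex[OF stp[OF Suc]] gS by simp
  qed
  have "prec s (g n) (g (Suc n))" for n using someI_ex[OF stp[OF ginf[of n]]] gS by simp
  then show "\<exists>g :: nat \<Rightarrow> nat. \<forall>n. prec s (g n) (g (Suc n))" by blast
qed

end
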